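(* Let $M\ge 3$ be an integer, let $\boldsymbol{\zeta}_1,\boldsymbol{\zeta}_2$ be unit vectors in $\mathbb{R}^M$, let $l\ge 0$ be an integer, $\sigma\in\{0,1\}$, and let $\rho$ be a real number for which all Gamma functions below are finite and $\Gamma(\rho)\neq\infty$. Then $$C^{\rho}_{2l+\sigma}\big((\boldsymbol{\zeta}_1\cdot\boldsymbol{\zeta}_2)\big)=\sum_{m=0}^{l}\frac{(-1)^{m+l}\,\Gamma(\rho+2l+\sigma+1)\,\Gamma(\rho+l+m+\sigma)\,\Gamma\!\left(\frac M2+l+m+\sigma\right)}{(l-m)!\,\Gamma(\rho)\,\Gamma(\rho+l+m+\sigma+1)\,\Gamma\!\left(\frac M2\right)}\int\frac{d\Omega_{\boldsymbol{\zeta}}}{S_M}\frac{\big(2(\boldsymbol{\zeta}_1\cdot\boldsymbol{\zeta})\big)^{2l+\sigma}}{(2l+\sigma)!}\,\frac{\big(2(\boldsymbol{\zeta}_2\cdot\boldsymbol{\zeta})\big)^{2m+\sigma}}{(2m+\sigma)!}.$$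
   Context: $C^{\rho}_n$ denotes the Gegenbauer polynomial of degree $n$ and parameter $\rho$. $d\Omega_{\boldsymbol\zeta}$ is the surface measure on the unit sphere $S^{M-1}\subset\mathbb{R}^M$, the integral is over the whole sphere, and $S_M=2\pi^{M/2}/\Gamma(M/2)$ is its total area. $(\cdot\,\cdot)$ denotes the Euclidean inner product. *)

theory Defs
  imports "HOL-Analysis.Analysis"
begin

definition gegenbauer :: "nat \<Rightarrow> real \<Rightarrow> real \<Rightarrow> real" where
  "gegenbauer n \<rho> x =
     (\<Sum>k\<le>n div 2. (-1)^k * pochhammer \<rho> (n - k) / (fact k * fact (n - 2*k)) * (2*x)^(n - 2*k))"

text \<open>Surface measure on the unit sphere of a Euclidean space, defined as the cone
  measure: sigma(A) = DIM * lebesgue-volume of {t x | 0 < t <= 1, x in A}; i.e. the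
  push-forward of DIM times Lebesgue measure on the unit ball under x |-> x/|x|.\<close>
definition sphere_surface_measure :: "'a::euclidean_space measure" where
  "sphere_surface_measure =
     density (distr (restrict_space lborel (ball 0 1)) borel (\<lambda>x. x /\<^sub>R norm x))
             (\<lambda>_. ennreal (real DIM('a)))"

definition sphere_area :: "nat \<Rightarrow> real" where
  "sphere_area M = 2 * pi powr (real M / 2) / Gamma (real M / 2)"

end

theory Submission
  imports Defs
begin
definition nrm :: "'a::euclidean_space \<Rightarrow> 'a" where "nrm x = x /\<^sub>R norm x"

lemma nrm_meas[measurable]: "nrm \<in> borel_measurable borel"
  unfolding nrm_def by measurable

definition avg :: "('a::euclidean_space \<Rightarrow> real) \<Rightarrow> real" where
  "avg g = integral\<^sup>L (restrict_space lborel (ball (0::'a) 1)) (\<lambda>x. g (nrm x))"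

lemma sphere_integral_avg:
  fixes g :: "'a::euclidean_space \<Rightarrow> real"
  assumes [measurable]: "g \<in> borel_measurable borel"
  shows "integral\<^sup>L sphere_surface_measure g = real DIM('a) * avg g"
proof -
  have m: "nrm \<in> measurable (restrict_space lborel (ball (0::'a) 1)) borel"
    by (rule measurable_restrict_space1) simp
  have "integral\<^sup>L sphere_surface_measure g =
     integral\<^sup>L (distr (restrict_space lborel (ball (0::'a) 1)) borel nrm) (\<lambda>x. real DIM('a) *\<^sub>R g x)"
    unfolding sphere_surface_measure_def nrm_def[abs_def]
    by (subst integral_density) auto
  also have "\<dots> = integral\<^sup>L (restrict_space lborel (ball (0::'a) 1)) (\<lambda>x. real DIM('a) *\<^sub>R g (nrm x))"
    by (subst integral_distr[OF m]) auto
  also have "\<dots> = real DIM('a) * avg g"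
    unfolding avg_def by simp
  finally show ?thesis .
qed

lemma fin_ball: "finite_measure (restrict_space lborel (ball (0::'a::euclidean_space) 1))"
  apply (rule finite_measureI)
  apply (subst space_restrict_space)
  apply (subst emeasure_restrict_space)
  apply (auto simp: emeasure_ball)
  done

lemma avg_integrable:
  fixes g :: "'a::euclidean_space \<Rightarrow> real"
  assumes "continuous_on UNIV g"
  shows "integrable (restrict_space lborel (ball (0::'a) 1)) (\<lambda>x. g (nrm x))"
proof -
  interpret finite_measure "restrict_space lborel (ball (0::'a) 1)" by (rule fin_ball)
  have gm[measurable]: "g \<in> borel_measurable borel"
    using assms by (simp add: borel_measurable_continuous_onI)
  obtain B where B: "\<And>x. x \<in> cball (0::'a) 1 \<Longrightarrow> norm (g x) \<le> B"
    using compact_imp_bounded[OF compact_continuous_image[OF continuous_on_subset[OF assms] compact_cball]]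
    unfolding bounded_iff by blast
  have "norm (nrm x) \<le> 1" for x :: 'a
    by (cases "x = 0") (auto simp: nrm_def)
  hence "norm (g (nrm x)) \<le> B" for x :: 'a using B by auto
  thus ?thesis
    by (intro integrable_const_bound[where B=B]) (auto intro!: measurable_restrict_space1)
qed


lemma avg_add:
  fixes f g :: "'a::euclidean_space \<Rightarrow> real"
  assumes "continuous_on UNIV f" "continuous_on UNIV g"
  shows "avg (\<lambda>x. f x + g x) = avg f + avg g"
  unfolding avg_def using avg_integrable[OF assms(1)] avg_integrable[OF assms(2)]
  by (rule Bochner_Integration.integral_add)

lemma avg_cmult:
  fixes g :: "'a::euclidean_space \<Rightarrow> real"
  shows "avg (\<lambda>x. c * g x) = c * avg g"
  unfolding avg_def by simp

lemma avg_sum: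
  fixes g :: "'i \<Rightarrow> 'a::euclidean_space \<Rightarrow> real"
  assumes "\<And>i. i \<in> I \<Longrightarrow> continuous_on UNIV (g i)"
  shows "avg (\<lambda>x. \<Sum>i\<in>I. g i x) = (\<Sum>i\<in>I. avg (g i))"
  unfolding avg_def using avg_integrable[OF assms]
  by (rule Bochner_Integration.integral_sum)

lemma avg_one: "avg (\<lambda>x::'a::euclidean_space. 1) = unit_ball_vol (DIM('a))"
proof -
  have "avg (\<lambda>x::'a. 1) = measure (restrict_space lborel (ball (0::'a) 1)) (ball 0 1)"
    unfolding avg_def by (simp add: space_restrict_space)
  also have "\<dots> = measure lborel (ball (0::'a) 1)"
    by (simp add: measure_restrict_space)
  also have "\<dots> = unit_ball_vol (DIM('a))"
    by (simp add: measure_def emeasure_ball)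
  finally show ?thesis .
qed

lemma avg_sphere:
  fixes g :: "'a::euclidean_space \<Rightarrow> real"
  assumes [measurable]: "g \<in> borel_measurable borel"
  shows "avg (\<lambda>x. g x * (x \<bullet> x)) = avg g"
proof -
  have "AE x in restrict_space lborel (ball (0::'a) 1). x \<noteq> 0"
    by (subst AE_restrict_space_iff) (auto intro: AE_mp[OF AE_lborel_singleton])
  hence "AE x in restrict_space lborel (ball (0::'a) 1). g (nrm x) * (nrm x \<bullet> nrm x) = g (nrm x)"
    by eventually_elim (simp add: nrm_def dot_square_norm)
  thus ?thesis unfolding avg_def by (rule integral_cong_AE[rotated 2]) (auto intro!: measurable_restrict_space1)
qed

lemma lborel_transl: "(\<integral>\<^sup>+y. g (y + c) \<partial>lborel) = (\<integral>\<^sup>+y. g y \<partial>lborel)"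
  if [measurable]: "g \<in> borel_measurable borel" for g :: "real \<Rightarrow> ennreal"
  using nn_integral_real_affine[of g 1 c] by (simp add: add.commute)

lemma shear_nn:
  fixes h :: "'a::euclidean_space \<Rightarrow> ennreal"
  assumes [measurable]: "h \<in> borel_measurable borel" and b: "b1 \<in> Basis" "b2 \<in> Basis" "b1 \<noteq> b2"
  shows "(\<integral>\<^sup>+x. h (x + (a * (x \<bullet> b2)) *\<^sub>R b1) \<partial>lborel) = (\<integral>\<^sup>+x. h x \<partial>lborel)"
proof -
  interpret product_sigma_finite "\<lambda>_. lborel :: real measure" by standard
  define \<Phi> where "\<Phi> = (\<lambda>f. \<Sum>b\<in>Basis. f b *\<^sub>R b :: 'a)"
  have [measurable]: "\<Phi> \<in> borel_measurable (Pi\<^sub>M Basis (\<lambda>_. lborel))"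
    unfolding \<Phi>_def by measurable
  define I where "I = Basis - {b1::'a}"
  have BI: "Basis = insert b1 I" "finite I" "b1 \<notin> I" using b by (auto simp: I_def)
  have [measurable]: "\<Phi> \<in> borel_measurable (Pi\<^sub>M (insert b1 I) (\<lambda>_. lborel))"
    using BI by simp
  have upd: "\<Phi> (x(b1 := y)) = y *\<^sub>R b1 + (\<Sum>b\<in>I. x b *\<^sub>R b)" for x y
  proof -
    have "\<Phi> g = g b1 *\<^sub>R b1 + (\<Sum>b\<in>I. g b *\<^sub>R b)" for g
      unfolding \<Phi>_def using BI by (metis (no_types) sum.insert)
    thus ?thesis using BI by (auto intro!: sum.cong)
  qed
  have inn: "\<Phi> (x(b1 := y)) \<bullet> b2 = x b2" for x y
  proof -
    have "(\<Sum>b\<in>I. x b * (b \<bullet> b2)) = (\<Sum>b\<in>I. if b = b2 then x b else 0)"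
      using b by (intro sum.cong) (auto simp: I_def inner_Basis)
    also have "\<dots> = x b2" using b BI by (simp add: I_def)
    finally show ?thesis using b by (simp add: upd inner_add_left inner_sum_left inner_Basis)
  qed
  have "(\<integral>\<^sup>+x. h (x + (a * (x \<bullet> b2)) *\<^sub>R b1) \<partial>lborel) =
     (\<integral>\<^sup>+f. h (\<Phi> f + (a * (\<Phi> f \<bullet> b2)) *\<^sub>R b1) \<partial>Pi\<^sub>M (insert b1 I) (\<lambda>_. lborel))"
    by (subst lborel_eq) (simp add: nn_integral_distr BI(1)[symmetric] \<Phi>_def)
  also have "\<dots> = (\<integral>\<^sup>+x. (\<integral>\<^sup>+y. h (\<Phi> (x(b1 := y)) + (a * (\<Phi> (x(b1 := y)) \<bullet> b2)) *\<^sub>R b1) \<partial>lborel) \<partial>Pi\<^sub>M I (\<lambda>_. lborel))"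
    using BI by (subst product_nn_integral_insert) auto
  also have "\<dots> = (\<integral>\<^sup>+x. (\<integral>\<^sup>+y. h (\<Phi> (x(b1 := y))) \<partial>lborel) \<partial>Pi\<^sub>M I (\<lambda>_. lborel))"
  proof -
    have eq: "(\<integral>\<^sup>+y. h (\<Phi> (x(b1 := y)) + (a * (\<Phi> (x(b1 := y)) \<bullet> b2)) *\<^sub>R b1) \<partial>lborel)
        = (\<integral>\<^sup>+y. h (\<Phi> (x(b1 := y))) \<partial>lborel)" for x
    proof -
      have "(\<lambda>y. h (\<Phi> (x(b1 := y)))) \<in> borel_measurable borel" unfolding upd by measurable
      from lborel_transl[OF this, of "a * x b2"]
      show ?thesis by (simp only: inn) (simp add: upd algebra_simps)
    qed
    show ?thesis by (simp only: eq)
  qed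
  also have "\<dots> = (\<integral>\<^sup>+f. h (\<Phi> f) \<partial>Pi\<^sub>M (insert b1 I) (\<lambda>_. lborel))"
    using BI by (subst product_nn_integral_insert) auto
  also have "\<dots> = (\<integral>\<^sup>+x. h x \<partial>lborel)"
    by (subst (2) lborel_eq) (simp add: nn_integral_distr BI(1)[symmetric] \<Phi>_def)
  finally show ?thesis .
qed

lemma shear_distr:
  fixes b1 b2 :: "'a::euclidean_space"
  assumes b: "b1 \<in> Basis" "b2 \<in> Basis" "b1 \<noteq> b2"
  shows "distr lborel borel (\<lambda>x. x + (a * (x \<bullet> b2)) *\<^sub>R b1) = (lborel :: 'a measure)"
proof -
  define S where "S = (\<lambda>x::'a. x + (a * (x \<bullet> b2)) *\<^sub>R b1)"
  have Sm[measurable]: "S \<in> borel_measurable borel" unfolding S_def by measurable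
  have "distr lborel borel S = lborel"
  proof (rule measure_eqI)
    fix A :: "'a set" assume "A \<in> sets (distr lborel borel S)"
    hence A[measurable]: "A \<in> sets borel" by simp
    have pre: "S -` A \<in> sets lborel"
      using measurable_sets[OF Sm A] by simp
    have "emeasure (distr lborel borel S) A = emeasure lborel (S -` A)"
      by (subst emeasure_distr) auto
    also have "\<dots> = (\<integral>\<^sup>+x. indicator (S -` A) x \<partial>lborel)"
      by (rule nn_integral_indicator[symmetric]) (rule pre)
    also have "\<dots> = (\<integral>\<^sup>+x. indicator A (S x) \<partial>lborel)"
      by (intro nn_integral_cong) (simp split: split_indicator)
    also have "\<dots> = (\<integral>\<^sup>+x. indicator A x \<partial>lborel)"
      unfolding S_def using b by (intro shear_nn) auto
    finally show "emeasure (distr lborel borel S) A = emeasure lborel A"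
      by simp
  qed simp
  thus ?thesis unfolding S_def .
qed

definition rot :: "'a::euclidean_space \<Rightarrow> 'a \<Rightarrow> real \<Rightarrow> real \<Rightarrow> 'a \<Rightarrow> 'a" where
  "rot b1 b2 c s x = x + ((c - 1) * (x \<bullet> b1) - s * (x \<bullet> b2)) *\<^sub>R b1 + (s * (x \<bullet> b1) + (c - 1) * (x \<bullet> b2)) *\<^sub>R b2"

lemma rot_shears:
  fixes b1 b2 :: "'a::euclidean_space"
  assumes b: "b1 \<in> Basis" "b2 \<in> Basis" "b1 \<noteq> b2" and cs: "c^2 + s^2 = 1" "c \<noteq> -1"
  defines "t \<equiv> s / (1 + c)"
  shows "rot b1 b2 c s = (\<lambda>x. x + (-t * (x \<bullet> b2)) *\<^sub>R b1) \<circ> (\<lambda>x. x + (s * (x \<bullet> b1)) *\<^sub>R b2) \<circ> (\<lambda>x. x + (-t * (x \<bullet> b2)) *\<^sub>R b1)"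
proof
  fix x
  have o: "b1 \<bullet> b2 = 0" "b2 \<bullet> b1 = 0" "b1 \<bullet> b1 = 1" "b2 \<bullet> b2 = 1" using b by (auto simp: inner_Basis)
  have c1: "1 + c \<noteq> 0" using cs by auto
  have st: "s * t = 1 - c"
  proof -
    have "s * t = s^2 / (1 + c)" by (simp add: t_def power2_eq_square)
    also have "\<dots> = (1 - c) * (1 + c) / (1 + c)" using cs by (simp add: algebra_simps power2_eq_square)
    finally show ?thesis using c1 by simp
  qed
  have tc: "t * (1 + c) = s" using c1 by (simp add: t_def)
  define u where "u = x \<bullet> b1"
  define v where "v = x \<bullet> b2"
  have e1: "-t * v - t * (v + s * (u - t * v)) = (c - 1) * u - s * v"
  proof -
    have "-t * v - t * (v + s * (u - t * v)) = - (s * t) * u + t * (s * t) * v - 2 * t * v" by (simp add: algebra_simps)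
    also have "\<dots> = (c - 1) * u - t * (1 + c) * v" unfolding st by (simp add: algebra_simps)
    finally show ?thesis unfolding tc .
  qed
  have e2: "s * (u - t * v) = s * u + (c - 1) * v"
  proof -
    have "s * (u - t * v) = s * u - (s * t) * v" by (simp add: algebra_simps)
    also have "\<dots> = s * u + (c - 1) * v" unfolding st by (simp add: algebra_simps)
    finally show ?thesis .
  qed
  define x1 where "x1 = x + (-t * v) *\<^sub>R b1"
  have x1: "x1 \<bullet> b1 = u - t * v" "x1 \<bullet> b2 = v" unfolding x1_def by (simp_all add: inner_add_left inner_diff_left o u_def v_def)
  define x2 where "x2 = x1 + (s * (u - t * v)) *\<^sub>R b2"
  have x2: "x2 \<bullet> b2 = v + s * (u - t * v)" unfolding x2_def by (simp add: inner_add_left o x1)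
  have "((\<lambda>x. x + (-t * (x \<bullet> b2)) *\<^sub>R b1) \<circ> (\<lambda>x. x + (s * (x \<bullet> b1)) *\<^sub>R b2) \<circ> (\<lambda>x. x + (-t * (x \<bullet> b2)) *\<^sub>R b1)) x
     = x2 + (-t * (v + s * (u - t * v))) *\<^sub>R b1"
  proof -
    have s1: "x + (-t * (x \<bullet> b2)) *\<^sub>R b1 = x1" by (simp add: x1_def v_def)
    have s2: "x1 + (s * (x1 \<bullet> b1)) *\<^sub>R b2 = x2" by (simp add: x2_def x1)
    have s3: "x2 + (-t * (x2 \<bullet> b2)) *\<^sub>R b1 = x2 + (-t * (v + s * (u - t * v))) *\<^sub>R b1" by (simp add: x2)
    show ?thesis by (simp only: comp_apply s1 s2 s3)
  qed
  also have "\<dots> = x + (-t * v + -t * (v + s * (u - t * v))) *\<^sub>R b1 + (s * (u - t * v)) *\<^sub>R b2"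
    unfolding x2_def x1_def scaleR_add_left by (simp add: algebra_simps)
  also have "\<dots> = rot b1 b2 c s x" using e1 e2 unfolding rot_def u_def v_def by simp
  finally show "rot b1 b2 c s x = ((\<lambda>x. x + (-t * (x \<bullet> b2)) *\<^sub>R b1) \<circ> (\<lambda>x. x + (s * (x \<bullet> b1)) *\<^sub>R b2) \<circ> (\<lambda>x. x + (-t * (x \<bullet> b2)) *\<^sub>R b1)) x"
    by simp
qed

lemma rot_distr:
  fixes b1 b2 :: "'a::euclidean_space"
  assumes b: "b1 \<in> Basis" "b2 \<in> Basis" "b1 \<noteq> b2" and cs: "c^2 + s^2 = 1" "c \<noteq> -1"
  shows "distr lborel borel (rot b1 b2 c s) = (lborel :: 'a measure)"
proof -
  define t where "t = s / (1 + c)"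
  define X where "X = (\<lambda>x::'a. x + (-t * (x \<bullet> b2)) *\<^sub>R b1)"
  define Y where "Y = (\<lambda>x::'a. x + (s * (x \<bullet> b1)) *\<^sub>R b2)"
  have [measurable]: "X \<in> borel_measurable borel" "Y \<in> borel_measurable borel"
    unfolding X_def Y_def by measurable
  have dX: "distr lborel borel X = lborel" unfolding X_def using b by (rule shear_distr)
  have dY: "distr lborel borel Y = lborel" unfolding Y_def using b by (intro shear_distr) auto
  have "rot b1 b2 c s = X \<circ> Y \<circ> X" unfolding X_def Y_def t_def using rot_shears[OF b cs] by simp
  hence "distr lborel borel (rot b1 b2 c s) = distr (distr (distr lborel borel X) borel Y) borel X"
    by (simp add: distr_distr comp_assoc)
  also have "\<dots> = lborel" by (simp add: dX dY)
  finally show ?thesis .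
qed

lemma rot_inner:
  fixes b1 b2 :: "'a::euclidean_space"
  assumes b: "b1 \<in> Basis" "b2 \<in> Basis" "b1 \<noteq> b2" and cs: "c^2 + s^2 = 1"
  shows "rot b1 b2 c s x \<bullet> rot b1 b2 c s y = x \<bullet> y"
proof -
  have o: "b1 \<bullet> b2 = 0" "b2 \<bullet> b1 = 0" "b1 \<bullet> b1 = 1" "b2 \<bullet> b2 = 1" using b by (auto simp: inner_Basis)
  define u where "u = x \<bullet> b1"
  define v where "v = x \<bullet> b2"
  define u' where "u' = y \<bullet> b1"
  define v' where "v' = y \<bullet> b2"
  have yx: "y \<bullet> x = x \<bullet> y" "b1 \<bullet> x = u" "b2 \<bullet> x = v" "b1 \<bullet> y = u'" "b2 \<bullet> y = v'"
    by (auto simp: inner_commute u_def v_def u'_def v'_def)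
  have "rot b1 b2 c s x \<bullet> rot b1 b2 c s y = x \<bullet> y +
     (((c - 1) * u - s * v) * u' + (s * u + (c - 1) * v) * v' + ((c - 1) * u' - s * v') * u + (s * u' + (c - 1) * v') * v
      + ((c - 1) * u - s * v) * ((c - 1) * u' - s * v') + (s * u + (c - 1) * v) * (s * u' + (c - 1) * v'))"
    unfolding rot_def by (simp add: inner_add_left inner_add_right o yx flip: u_def v_def u'_def v'_def) (simp add: algebra_simps)
  also have "(((c - 1) * u - s * v) * u' + (s * u + (c - 1) * v) * v' + ((c - 1) * u' - s * v') * u + (s * u' + (c - 1) * v') * v
      + ((c - 1) * u - s * v) * ((c - 1) * u' - s * v') + (s * u + (c - 1) * v) * (s * u' + (c - 1) * v')) = 0"
    using cs by algebra
  finally show ?thesis by simp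
qed

lemma rot_scaleR: "rot b1 b2 c s (a *\<^sub>R x) = a *\<^sub>R rot b1 b2 c s x"
  unfolding rot_def by (simp add: algebra_simps)

lemma rot_norm:
  fixes b1 b2 :: "'a::euclidean_space"
  assumes b: "b1 \<in> Basis" "b2 \<in> Basis" "b1 \<noteq> b2" and cs: "c^2 + s^2 = 1"
  shows "norm (rot b1 b2 c s x) = norm x"
  using rot_inner[OF b cs, of x x] by (simp add: norm_eq_sqrt_inner)

lemma rot_meas[measurable]: "rot b1 b2 c s \<in> borel_measurable borel"
  unfolding rot_def by measurable

lemma avg_rot:
  fixes b1 b2 :: "'a::euclidean_space" and g :: "'a \<Rightarrow> real"
  assumes b: "b1 \<in> Basis" "b2 \<in> Basis" "b1 \<noteq> b2" and cs: "c^2 + s^2 = 1" "c \<noteq> -1"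
    and [measurable]: "g \<in> borel_measurable borel"
  shows "avg (\<lambda>\<zeta>. g (rot b1 b2 c s \<zeta>)) = avg g"
proof -
  let ?R = "rot b1 b2 c s"
  have nR: "norm (?R x) = norm x" for x using rot_norm[OF b cs(1)] .
  have Rn: "?R (nrm x) = nrm (?R x)" for x unfolding nrm_def by (simp add: rot_scaleR nR)
  have sets: "ball (0::'a) 1 \<inter> space lborel \<in> sets lborel" by simp
  have [measurable]: "ball (0::'a) 1 \<in> sets borel" by simp
  have "avg (\<lambda>\<zeta>. g (?R \<zeta>)) = integral\<^sup>L lborel (\<lambda>x. indicator (ball (0::'a) 1) x *\<^sub>R g (nrm (?R x)))"
    unfolding avg_def Rn by (rule integral_restrict_space[OF sets])
  also have "\<dots> = integral\<^sup>L lborel (\<lambda>x. indicator (ball (0::'a) 1) (?R x) *\<^sub>R g (nrm (?R x)))"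
    by (intro Bochner_Integration.integral_cong refl) (simp add: indicator_def nR)
  also have "\<dots> = integral\<^sup>L (distr lborel borel ?R) (\<lambda>y. indicator (ball (0::'a) 1) y *\<^sub>R g (nrm y))"
    by (subst integral_distr) auto
  also have "\<dots> = integral\<^sup>L lborel (\<lambda>y. indicator (ball (0::'a) 1) y *\<^sub>R g (nrm y))"
    by (simp add: rot_distr[OF b cs])
  also have "\<dots> = avg g"
    unfolding avg_def by (rule integral_restrict_space[OF sets, symmetric])
  finally show ?thesis .
qed

definition F :: "nat \<Rightarrow> 'a::euclidean_space \<Rightarrow> real" where
  "F k u = avg (\<lambda>\<zeta>. (u \<bullet> \<zeta>) ^ k)"

lemma F_rot:
  fixes b1 b2 :: "'a::euclidean_space"
  assumes b: "b1 \<in> Basis" "b2 \<in> Basis" "b1 \<noteq> b2" and cs: "c^2 + s^2 = 1" "c \<noteq> -1"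
  shows "F k (rot b1 b2 c s u) = F k u"
proof -
  have "F k (rot b1 b2 c s u) = avg (\<lambda>\<zeta>. (rot b1 b2 c s u \<bullet> rot b1 b2 c s \<zeta>) ^ k)"
    unfolding F_def by (rule avg_rot[OF b cs, symmetric]) measurable
  also have "\<dots> = F k u" unfolding F_def rot_inner[OF b cs(1)] ..
  finally show ?thesis .
qed

lemma F_scale: "F k (t *\<^sub>R u) = t ^ k * F k u"
  unfolding F_def by (simp add: power_mult_distrib avg_cmult)

lemma F_givens:
  fixes u e :: "'a::euclidean_space"
  assumes k: "even k" and e: "e \<in> Basis"
  shows "F k u = F k (norm u *\<^sub>R e)"
proof -
  have "card {b \<in> Basis - {e}. u \<bullet> b \<noteq> 0} = n \<Longrightarrow> F k u = F k (norm u *\<^sub>R e)" for n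
  proof (induction n arbitrary: u)
    case 0
    hence emp: "{b \<in> Basis - {e}. u \<bullet> b \<noteq> 0} = {}" by simp
    have "u = (\<Sum>b\<in>Basis. (u \<bullet> b) *\<^sub>R b)" by (simp add: euclidean_representation)
    also have "\<dots> = (\<Sum>b\<in>Basis. if b = e then (u \<bullet> e) *\<^sub>R e else 0)"
      using emp by (intro sum.cong) auto
    also have "\<dots> = (u \<bullet> e) *\<^sub>R e" using e by simp
    finally have ue: "u = (u \<bullet> e) *\<^sub>R e" .
    have nu: "norm u = \<bar>u \<bullet> e\<bar>" using e by (subst ue) simp
    have "F k u = (u \<bullet> e) ^ k * F k e" by (subst ue) (simp add: F_scale)
    also have "(u \<bullet> e) ^ k = \<bar>u \<bullet> e\<bar> ^ k" using k by (simp add: power_even_abs)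
    also have "\<bar>u \<bullet> e\<bar> ^ k * F k e = F k (norm u *\<^sub>R e)" by (simp add: F_scale nu)
    finally show ?case .
  next
    case (Suc n)
    obtain b where b: "b \<in> Basis" "b \<noteq> e" "u \<bullet> b \<noteq> 0"
      using Suc.prems by (metis (mono_tags, lifting) Diff_iff card.empty empty_Collect_eq insertI1 nat.distinct(1))
    define r where "r = sqrt ((u \<bullet> e)^2 + (u \<bullet> b)^2)"
    have r2: "r^2 = (u \<bullet> e)^2 + (u \<bullet> b)^2" unfolding r_def by simp
    have rpos: "r > 0" unfolding r_def using b(3) by (simp add: add_nonneg_pos)
    define c where "c = (u \<bullet> e) / r"
    define s where "s = - (u \<bullet> b) / r"
    have cs: "c^2 + s^2 = 1"
    proof -
      have "c^2 + s^2 = ((u \<bullet> e)^2 + (u \<bullet> b)^2) / r^2"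
        unfolding c_def s_def by (simp add: power_divide add_divide_distrib)
      thus ?thesis using rpos r2 b(3) by simp
    qed
    have cn: "c \<noteq> -1"
    proof
      assume "c = -1" hence "s^2 = 0" using cs by simp
      thus False using b(3) rpos by (simp add: s_def)
    qed
    have eb: "e \<bullet> b = 0" "b \<bullet> e = 0" "e \<bullet> e = 1" "b \<bullet> b = 1" using b e by (auto simp: inner_Basis)
    define u' where "u' = rot e b c s u"
    have u'e: "u' \<bullet> e = r"
    proof -
      have "u' \<bullet> e = c * (u \<bullet> e) - s * (u \<bullet> b)"
        unfolding u'_def rot_def by (simp add: inner_add_left eb algebra_simps)
      also have "\<dots> = r^2 / r" unfolding c_def s_def r2 by (simp add: power2_eq_square add_divide_distrib)
      finally show ?thesis using rpos by (simp add: power2_eq_square)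
    qed
    have u'b: "u' \<bullet> b = 0"
    proof -
      have "u' \<bullet> b = s * (u \<bullet> e) + c * (u \<bullet> b)"
        unfolding u'_def rot_def by (simp add: inner_add_left eb algebra_simps)
      also have "\<dots> = 0" unfolding c_def s_def by (simp add: field_simps)
      finally show ?thesis .
    qed
    have u'o: "u' \<bullet> b' = u \<bullet> b'" if "b' \<in> Basis" "b' \<noteq> e" "b' \<noteq> b" for b'
      using that b e unfolding u'_def rot_def by (simp add: inner_add_left inner_Basis)
    have "{b' \<in> Basis - {e}. u' \<bullet> b' \<noteq> 0} = {b' \<in> Basis - {e}. u \<bullet> b' \<noteq> 0} - {b}"
      using u'b u'o by (auto, metis)
    hence "card {b' \<in> Basis - {e}. u' \<bullet> b' \<noteq> 0} = n"
      using Suc.prems b by (simp add: card_Diff_singleton)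
    hence "F k u' = F k (norm u' *\<^sub>R e)" by (rule Suc.IH)
    moreover have "norm u' = norm u" unfolding u'_def using e b cs by (intro rot_norm) auto
    moreover have "F k u' = F k u" unfolding u'_def using e b cs cn by (intro F_rot) auto
    ultimately show ?case by simp
  qed
  thus ?thesis by blast
qed

definition T :: "nat \<Rightarrow> real \<Rightarrow> nat \<Rightarrow> real" where
  "T J x p = (\<Sum>k\<le>J. \<Sum>a\<le>J-k. if p = 2*a+k then real (J choose k) * real ((J-k) choose a) * (2*x)^k else 0)"

lemma trinomial:
  fixes t x :: real
  shows "(t^2 + 2*x*t + 1)^J = (\<Sum>p\<le>2*J. T J x p * t^p)"
proof -
  have "(t^2 + 2*x*t + 1)^J = ((2*x*t) + (t^2 + 1))^J" by (simp add: algebra_simps)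
  also have "\<dots> = (\<Sum>k\<le>J. real (J choose k) * (2*x*t)^k * (t^2+1)^(J-k))"
    by (rule binomial_ring)
  also have "\<dots> = (\<Sum>k\<le>J. \<Sum>a\<le>J-k. real (J choose k) * real ((J-k) choose a) * (2*x)^k * t^(2*a+k))"
  proof (intro sum.cong refl)
    fix k assume "k \<in> {..J}"
    have "(t^2+1)^(J-k) = (\<Sum>a\<le>J-k. real ((J-k) choose a) * (t^2)^a * 1^(J-k-a))"
      by (rule binomial_ring)
    then show "real (J choose k) * (2*x*t)^k * (t^2+1)^(J-k) = (\<Sum>a\<le>J-k. real (J choose k) * real ((J-k) choose a) * (2*x)^k * t^(2*a+k))"
    proof -
      have tt: "(t^2)^a = t^(2*a)" for a by (simp add: power_mult)
      show ?thesis unfolding \<open>(t^2+1)^(J-k) = _\<close>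
        by (simp add: sum_distrib_left power_mult_distrib power_add tt algebra_simps)
    qed
  qed
  also have "\<dots> = (\<Sum>k\<le>J. \<Sum>a\<le>J-k. \<Sum>p\<le>2*J. if p = 2*a+k then real (J choose k) * real ((J-k) choose a) * (2*x)^k * t^p else 0)"
  proof (intro sum.cong refl)
    fix k a assume "k \<in> {..J}" "a \<in> {..J-k}"
    hence "2*a+k \<le> 2*J" by auto
    thus "real (J choose k) * real ((J-k) choose a) * (2*x)^k * t^(2*a+k) =
      (\<Sum>p\<le>2*J. if p = 2*a+k then real (J choose k) * real ((J-k) choose a) * (2*x)^k * t^p else 0)"
      by (simp add: sum.delta)
  qed
  also have "\<dots> = (\<Sum>k\<le>J. \<Sum>p\<le>2*J. \<Sum>a\<le>J-k. if p = 2*a+k then real (J choose k) * real ((J-k) choose a) * (2*x)^k * t^p else 0)"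
    by (rule sum.cong[OF refl], rule sum.swap)
  also have "\<dots> = (\<Sum>p\<le>2*J. \<Sum>k\<le>J. \<Sum>a\<le>J-k. if p = 2*a+k then real (J choose k) * real ((J-k) choose a) * (2*x)^k * t^p else 0)"
    by (rule sum.swap)
  also have "\<dots> = (\<Sum>p\<le>2*J. T J x p * t^p)"
    unfolding T_def sum_distrib_right by (intro sum.cong refl) auto
  finally show ?thesis .
qed

lemma avg_cont: "continuous_on UNIV (\<lambda>\<zeta>::'a::euclidean_space. (p \<bullet> \<zeta>)^k * (q \<bullet> \<zeta>)^n)"
  by (intro continuous_intros)

lemma poly_moment:
  fixes p q :: "'a::euclidean_space"
  shows "F N (t *\<^sub>R p + q) = (\<Sum>k\<le>N. (real (N choose k) * avg (\<lambda>\<zeta>. (p \<bullet> \<zeta>)^k * (q \<bullet> \<zeta>)^(N-k))) * t^k)"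
proof -
  have "F N (t *\<^sub>R p + q) = avg (\<lambda>\<zeta>. (t * (p \<bullet> \<zeta>) + q \<bullet> \<zeta>)^N)"
    unfolding F_def by (simp add: inner_add_left)
  also have "\<dots> = avg (\<lambda>\<zeta>. \<Sum>k\<le>N. (real (N choose k) * t^k) * ((p \<bullet> \<zeta>)^k * (q \<bullet> \<zeta>)^(N-k)))"
    by (simp only: binomial_ring) (simp add: power_mult_distrib mult_ac)
  also have "\<dots> = (\<Sum>k\<le>N. avg (\<lambda>\<zeta>. (real (N choose k) * t^k) * ((p \<bullet> \<zeta>)^k * (q \<bullet> \<zeta>)^(N-k))))"
    by (rule avg_sum) (intro continuous_intros)
  also have "\<dots> = (\<Sum>k\<le>N. (real (N choose k) * avg (\<lambda>\<zeta>. (p \<bullet> \<zeta>)^k * (q \<bullet> \<zeta>)^(N-k))) * t^k)"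
    by (simp add: avg_cmult mult_ac)
  finally show ?thesis .
qed

definition e0 :: "'a::euclidean_space" where "e0 = (SOME b. b \<in> Basis)"

lemma e0: "e0 \<in> Basis" unfolding e0_def by (rule someI_ex) (use nonempty_Basis in blast)

definition cc :: "nat \<Rightarrow> 'a::euclidean_space itself \<Rightarrow> real" where
  "cc J _ = F (2*J) (e0 :: 'a)"

lemma F_even: "F (2*J) (u::'a::euclidean_space) = norm u ^ (2*J) * cc J TYPE('a)"
  unfolding cc_def by (subst F_givens[OF _ e0]) (auto simp: F_scale)

lemma coeff_moment:
  fixes p q :: "'a::euclidean_space"
  assumes "norm p = 1" "norm q = 1" "n \<le> 2*J"
  shows "real ((2*J) choose n) * avg (\<lambda>\<zeta>. (p \<bullet> \<zeta>)^n * (q \<bullet> \<zeta>)^(2*J-n)) = T J (p \<bullet> q) n * cc J TYPE('a)"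
proof -
  have "\<forall>t. (\<Sum>k\<le>2*J. (real ((2*J) choose k) * avg (\<lambda>\<zeta>. (p \<bullet> \<zeta>)^k * (q \<bullet> \<zeta>)^(2*J-k))) * t^k)
         = (\<Sum>k\<le>2*J. (T J (p \<bullet> q) k * cc J TYPE('a)) * t^k)"
  proof
    fix t :: real
    have pp: "p \<bullet> p = 1" "q \<bullet> q = 1" using assms(1,2) power2_norm_eq_inner[of p] power2_norm_eq_inner[of q] by simp_all
    have "norm (t *\<^sub>R p + q) ^ 2 = (t *\<^sub>R p + q) \<bullet> (t *\<^sub>R p + q)" by (rule power2_norm_eq_inner)
    also have "\<dots> = t^2 + 2 * (p \<bullet> q) * t + 1"
      by (simp add: inner_add_left inner_add_right pp inner_commute[of q p] power2_eq_square algebra_simps)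
    finally have nn: "norm (t *\<^sub>R p + q) ^ 2 = t^2 + 2 * (p \<bullet> q) * t + 1" .
    have "(\<Sum>k\<le>2*J. (real ((2*J) choose k) * avg (\<lambda>\<zeta>. (p \<bullet> \<zeta>)^k * (q \<bullet> \<zeta>)^(2*J-k))) * t^k)
        = F (2*J) (t *\<^sub>R p + q)" by (rule poly_moment[symmetric])
    also have "\<dots> = (norm (t *\<^sub>R p + q) ^ 2) ^ J * cc J TYPE('a)" by (simp add: F_even power_mult)
    also have "\<dots> = (\<Sum>k\<le>2*J. T J (p \<bullet> q) k * t^k) * cc J TYPE('a)" unfolding nn trinomial ..
    finally show "(\<Sum>k\<le>2*J. (real ((2*J) choose k) * avg (\<lambda>\<zeta>. (p \<bullet> \<zeta>)^k * (q \<bullet> \<zeta>)^(2*J-k))) * t^k)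
         = (\<Sum>k\<le>2*J. (T J (p \<bullet> q) k * cc J TYPE('a)) * t^k)" by (simp add: sum_distrib_left sum_distrib_right mult_ac)
  qed
  thus ?thesis using assms(3) by (subst (asm) polyfun_eq_coeffs) auto
qed

lemma T_zero: "T J 0 p = (\<Sum>a\<le>J. if p = 2*a then real (J choose a) else 0)"
proof -
  have "T J 0 p = (\<Sum>k\<le>J. if k = 0 then (\<Sum>a\<le>J. if p = 2*a then real (J choose a) else 0) else 0)"
    unfolding T_def
  proof (intro sum.cong refl)
    fix k assume "k \<in> {..J}"
    show "(\<Sum>a\<le>J-k. if p = 2*a+k then real (J choose k) * real ((J-k) choose a) * (2*0)^k else 0) =
      (if k = 0 then (\<Sum>a\<le>J. if p = 2*a then real (J choose a) else 0) else 0)"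
    proof (cases "k = 0")
      case True show ?thesis unfolding True by (simp cong: if_cong)
    next
      case False thus ?thesis by (simp add: power_0_left cong: if_cong)
    qed
  qed
  also have "\<dots> = (\<Sum>a\<le>J. if p = 2*a then real (J choose a) else 0)" by simp
  finally show ?thesis .
qed

lemma choose_2j: "real ((2*j+2) choose (2*j)) = (real j + 1) * (2 * real j + 1)"
proof -
  have "(2*j+2) choose (2*j) = (2*j+2) choose 2" by (subst binomial_symmetric) auto
  also have "\<dots> = (2*j+2) * (2*j+1) div 2" by (simp add: choose_two)
  also have "\<dots> = (j+1) * (2*j+1)" by simp
  finally have eq: "(2*j+2) choose (2*j) = (j+1) * (2*j+1)" .
  have "real ((2*j+2) choose (2*j)) = real ((j+1) * (2*j+1))" by (simp only: eq)
  also have "\<dots> = (real j + 1) * (2 * real j + 1)" by (simp add: algebra_simps)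
  finally show ?thesis .
qed

lemma mixed_moment:
  fixes e b :: "'a::euclidean_space"
  assumes "e \<in> Basis" "b \<in> Basis" "e \<noteq> b"
  shows "avg (\<lambda>\<zeta>. (e \<bullet> \<zeta>)^(2*j) * (b \<bullet> \<zeta>)^2) = cc (Suc j) TYPE('a) / (2 * real j + 1)"
proof -
  have eb: "e \<bullet> b = 0" "norm e = 1" "norm b = 1" using assms by (auto simp: inner_Basis)
  have "real ((2*Suc j) choose (2*j)) * avg (\<lambda>\<zeta>. (e \<bullet> \<zeta>)^(2*j) * (b \<bullet> \<zeta>)^(2*Suc j - 2*j)) = T (Suc j) (e \<bullet> b) (2*j) * cc (Suc j) TYPE('a)"
    using eb by (intro coeff_moment) auto
  moreover have "T (Suc j) (e \<bullet> b) (2*j) = real j + 1"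
    unfolding eb T_zero by (simp add: sum.delta)
  moreover have "real ((2*Suc j) choose (2*j)) = (real j + 1) * (2 * real j + 1)"
    using choose_2j[of j] by simp
  moreover have "2*Suc j - 2*j = 2" by simp
  ultimately have "(real j + 1) * (2 * real j + 1) * avg (\<lambda>\<zeta>. (e \<bullet> \<zeta>)^(2*j) * (b \<bullet> \<zeta>)^2) = (real j + 1) * cc (Suc j) TYPE('a)"
    by simp
  hence "(real j + 1) * ((2 * real j + 1) * avg (\<lambda>\<zeta>. (e \<bullet> \<zeta>)^(2*j) * (b \<bullet> \<zeta>)^2)) = (real j + 1) * cc (Suc j) TYPE('a)"
    by (simp add: mult.assoc)
  hence "(2 * real j + 1) * avg (\<lambda>\<zeta>. (e \<bullet> \<zeta>)^(2*j) * (b \<bullet> \<zeta>)^2) = cc (Suc j) TYPE('a)"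
    by (subst (asm) mult_left_cancel) auto
  thus ?thesis by (simp add: field_simps add_pos_nonneg)
qed

lemma cc_rec: "cc j TYPE('a::euclidean_space) = cc (Suc j) TYPE('a) * (2 * real j + real DIM('a)) / (2 * real j + 1)"
proof -
  let ?e = "e0 :: 'a"
  have "cc j TYPE('a) = avg (\<lambda>\<zeta>. (?e \<bullet> \<zeta>)^(2*j) * (\<zeta> \<bullet> \<zeta>))"
    unfolding cc_def F_def by (rule avg_sphere[symmetric]) measurable
  also have "\<dots> = avg (\<lambda>\<zeta>. \<Sum>b\<in>Basis. (?e \<bullet> \<zeta>)^(2*j) * (b \<bullet> \<zeta>)^2)"
    by (subst euclidean_inner) (simp add: sum_distrib_left power2_eq_square inner_commute)
  also have "\<dots> = (\<Sum>b\<in>Basis. avg (\<lambda>\<zeta>. (?e \<bullet> \<zeta>)^(2*j) * (b \<bullet> \<zeta>)^2))"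
    by (rule avg_sum) (intro continuous_intros)
  also have "\<dots> = (\<Sum>b\<in>Basis. if b = ?e then cc (Suc j) TYPE('a) else cc (Suc j) TYPE('a) / (2 * real j + 1))"
  proof (intro sum.cong refl)
    fix b :: 'a assume b: "b \<in> Basis"
    show "avg (\<lambda>\<zeta>. (?e \<bullet> \<zeta>)^(2*j) * (b \<bullet> \<zeta>)^2) = (if b = ?e then cc (Suc j) TYPE('a) else cc (Suc j) TYPE('a) / (2 * real j + 1))"
    proof (cases "b = ?e")
      case True thus ?thesis by (simp add: cc_def F_def power_add[symmetric])
    next
      case False thus ?thesis using mixed_moment[OF e0 b] by auto
    qed
  qed
  also have "\<dots> = cc (Suc j) TYPE('a) + (real DIM('a) - 1) * (cc (Suc j) TYPE('a) / (2 * real j + 1))"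
  proof -
    have i1: "Basis \<inter> {?e} = {?e}" "Basis \<inter> - {?e} = Basis - {?e}" using e0 by auto
    have "DIM('a) \<ge> 1" by (simp add: Suc_leI)
    have "card (Basis - {?e}) = DIM('a) - 1" using e0 by (subst card_Diff_singleton) auto
    hence "real (card (Basis - {?e})) = real DIM('a) - 1" using \<open>DIM('a) \<ge> 1\<close> by (simp add: of_nat_diff)
    thus ?thesis by (simp add: sum.If_cases i1)
  qed
  also have "\<dots> = cc (Suc j) TYPE('a) * (2 * real j + real DIM('a)) / (2 * real j + 1)"
    by (simp add: field_simps)
  finally show ?thesis .
qed

lemma cc_closed:
  "cc j TYPE('a::euclidean_space) * pochhammer (real DIM('a) / 2) j = unit_ball_vol (real DIM('a)) * pochhammer (1/2) j"
proof (induction j)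
  case 0
  show ?case by (simp add: cc_def F_def avg_one)
next
  case (Suc j)
  have D: "real DIM('a) > 0" by simp
  have "cc (Suc j) TYPE('a) * pochhammer (real DIM('a) / 2) (Suc j)
      = (cc (Suc j) TYPE('a) * (2 * real j + real DIM('a)) / (2 * real j + 1)) * pochhammer (real DIM('a) / 2) j * ((2 * real j + 1) / 2)"
    by (simp add: pochhammer_Suc field_simps)
  also have "\<dots> = cc j TYPE('a) * pochhammer (real DIM('a) / 2) j * ((2 * real j + 1) / 2)"
    by (simp add: cc_rec[of j, symmetric])
  also have "\<dots> = unit_ball_vol (real DIM('a)) * pochhammer (1/2) (Suc j)"
    unfolding Suc.IH by (simp add: pochhammer_Suc field_simps)
  finally show ?case .
qed

lemma U_lemma:
  fixes B :: real
  assumes "\<And>r::nat. B + real r \<noteq> 0"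
  shows "(\<Sum>r\<le>a. (-1)^r * real (a choose r) / (B + real r)) = fact a / pochhammer B (Suc a)"
  using assms
proof (induction a arbitrary: B)
  case 0
  thus ?case by simp
next
  case (Suc a)
  have B0: "B \<noteq> 0" using Suc.prems[of 0] by simp
  have hB1: "\<And>r::nat. (B + 1) + real r \<noteq> 0" using Suc.prems by (metis add.assoc of_nat_Suc add.commute)
  have IH0: "(\<Sum>r\<le>a. (-1)^r * real (a choose r) / (B + real r)) = fact a / pochhammer B (Suc a)"
    using Suc.IH[of B] Suc.prems by blast
  have IH1: "(\<Sum>r\<le>a. (-1)^r * real (a choose r) / (B + 1 + real r)) = fact a / pochhammer (B + 1) (Suc a)"
    using Suc.IH[of "B + 1"] hB1 by blast
  have split: "(\<Sum>r\<le>Suc a. (-1)^r * real (Suc a choose r) / (B + real r))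
     = 1 / B + (\<Sum>r\<le>a. (-1)^(Suc r) * real (a choose r) / (B + 1 + real r))
             + (\<Sum>r\<le>a. (-1)^(Suc r) * real (a choose Suc r) / (B + 1 + real r))"
    apply (subst sum.atMost_Suc_shift)
    apply (simp add: sum.distrib add_divide_distrib ring_distribs add_ac)
    apply (simp only: sum.distrib[symmetric])
    apply (intro sum.cong refl)
    apply (simp add: diff_divide_distrib)
    done
  have last: "(\<Sum>r\<le>a. (-1)^(Suc r) * real (a choose Suc r) / (B + 1 + real r))
      = (\<Sum>r\<le>a. (-1)^r * real (a choose r) / (B + real r)) - 1 / B"
  proof -
    have "(\<Sum>r\<le>Suc a. (-1)^r * real (a choose r) / (B + real r))
       = 1 / B + (\<Sum>r\<le>a. (-1)^(Suc r) * real (a choose Suc r) / (B + 1 + real r))"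
      by (subst sum.atMost_Suc_shift) (simp add: add_ac)
    moreover have "(\<Sum>r\<le>Suc a. (-1)^r * real (a choose r) / (B + real r)) = (\<Sum>r\<le>a. (-1)^r * real (a choose r) / (B + real r))"
      by simp
    ultimately show ?thesis by simp
  qed
  have neg: "(\<Sum>r\<le>a. (-1)^(Suc r) * real (a choose r) / (B + 1 + real r)) = - (\<Sum>r\<le>a. (-1)^r * real (a choose r) / (B + 1 + real r))"
    by (simp add: sum_negf[symmetric])
  have "(\<Sum>r\<le>Suc a. (-1)^r * real (Suc a choose r) / (B + real r))
     = fact a / pochhammer B (Suc a) - fact a / pochhammer (B + 1) (Suc a)"
    unfolding split last neg IH0 IH1 by simp
  also have "\<dots> = fact (Suc a) / pochhammer B (Suc (Suc a))"
  proof -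
    have p1: "pochhammer B (Suc (Suc a)) = pochhammer B (Suc a) * (B + real (Suc a))"
      by (simp add: pochhammer_Suc)
    have p2: "pochhammer B (Suc (Suc a)) = B * pochhammer (B + 1) (Suc a)"
      by (simp add: pochhammer_rec)
    have nz1: "pochhammer B (Suc a) \<noteq> 0" "pochhammer (B + 1) (Suc a) \<noteq> 0"
      using Suc.prems hB1 by (auto simp: pochhammer_eq_0_iff eq_neg_iff_add_eq_0)
    have nz2: "B + real (Suc a) \<noteq> 0" using Suc.prems by blast
    define P where "P = pochhammer B (Suc a)"
    define Q where "Q = pochhammer (B + 1) (Suc a)"
    define R where "R = pochhammer B (Suc (Suc a))"
    have R1: "R = P * (B + real (Suc a))" and R2: "R = B * Q" unfolding P_def Q_def R_def using p1 p2 by auto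
    have PQ: "P \<noteq> 0" "Q \<noteq> 0" using nz1 unfolding P_def Q_def by auto
    have R0: "R \<noteq> 0" using R1 PQ nz2 by simp
    have "fact (Suc a) / R = fact a * (B + real (Suc a)) / R - fact a * B / R"
      by (simp add: diff_divide_distrib[symmetric] algebra_simps)
    also have "fact a * (B + real (Suc a)) / R = fact a / P" unfolding R1 using PQ nz2 by simp
    also have "fact a * B / R = fact a / Q" unfolding R2 using PQ B0 by simp
    finally show ?thesis unfolding P_def Q_def R_def by simp
  qed
  finally show ?case .
qed

lemma S_lemma:
  fixes B :: real
  assumes "\<And>r::nat. B + real r \<noteq> 0"
  shows "(\<Sum>r\<le>a. (-1)^r / ((B + real r) * fact (a - r) * fact r)) = 1 / pochhammer B (Suc a)"
proof -
  have "(\<Sum>r\<le>a. (-1)^r / ((B + real r) * fact (a - r) * fact r))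
      = (\<Sum>r\<le>a. (-1)^r * real (a choose r) / (B + real r)) / fact a"
    unfolding sum_divide_distrib
  proof (intro sum.cong refl)
    fix r assume r: "r \<in> {..a}"
    have Br: "B + real r \<noteq> 0" by (rule assms)
    have bf: "real (a choose r) = fact a / (fact r * fact (a - r))" using r by (simp add: binomial_fact)
    show "(-1)^r / ((B + real r) * fact (a - r) * fact r) = (-1)^r * real (a choose r) / (B + real r) / fact a"
    proof -
      have gen: "\<And>y::real. y \<noteq> 0 \<Longrightarrow> (-1)^r / (y * fact (a - r) * fact r) = (-1)^r * (fact a / (fact r * fact (a - r))) / y / fact a"
        by (simp add: field_simps)
      show ?thesis unfolding bf by (rule gen[OF Br])
    qed
  qed
  also have "\<dots> = 1 / pochhammer B (Suc a)" unfolding U_lemma[OF assms] by simp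
  finally show ?thesis .
qed

lemma pochhammer_half: "4^J * fact J * pochhammer (1/2::real) J = fact (2*J)"
proof (induction J)
  case 0 thus ?case by simp
next
  case (Suc J)
  have "4^Suc J * fact (Suc J) * pochhammer (1/2::real) (Suc J)
      = (4^J * fact J * pochhammer (1/2::real) J) * (4 * (real J + 1) * (1/2 + real J))"
    by (simp add: pochhammer_Suc algebra_simps)
  also have "\<dots> = fact (2*J) * ((2 * real J + 1) * (2 * real J + 2))" unfolding Suc.IH
    by (simp add: algebra_simps)
  also have "\<dots> = fact (2 * Suc J)"
    by (simp add: fact_Suc algebra_simps)
  finally show ?case .
qed

lemma sum_restrict_le:
  fixes h :: "nat \<Rightarrow> real"
  assumes "l \<le> J"
  shows "(\<Sum>a\<le>J. if a \<le> l then h a else 0) = (\<Sum>a\<le>l. h a)"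
proof -
  have "{a \<in> {..J}. a \<le> l} = {..l}" using assms by auto
  thus ?thesis using sum.inter_filter[of "{..J}" h "\<lambda>a. a \<le> l"] by simp
qed

lemma T_closed:
  assumes s: "\<sigma> \<le> 1"
  shows "T (l+m+\<sigma>) x (2*l+\<sigma>) / fact (l+m+\<sigma>) =
     (\<Sum>a\<le>l. if l - a \<le> m then (2*x)^(2*l+\<sigma>-2*a) / (fact (2*l+\<sigma>-2*a) * fact a * fact (m+a-l)) else 0)"
proof -
  define J where "J = l+m+\<sigma>"
  define n where "n = 2*l+\<sigma>"
  define f where "f = (\<lambda>k a. real (J choose k) * real ((J-k) choose a) * (2*x)^k)"
  have "T J x n = (\<Sum>k\<le>J. \<Sum>a\<le>J-k. if n = 2*a+k then f k a else 0)"
    unfolding T_def f_def ..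
  also have "\<dots> = (\<Sum>k\<le>J. \<Sum>a\<le>J. if a \<le> J-k \<and> n = 2*a+k then f k a else 0)"
  proof (rule sum.cong[OF refl])
    fix k assume "k \<in> {..J}"
    have "{a \<in> {..J}. a \<le> J-k} = {..J-k}" by auto
    hence "(\<Sum>a\<le>J-k. if n = 2*a+k then f k a else 0) = (\<Sum>a\<le>J. if a \<le> J-k then (if n = 2*a+k then f k a else 0) else 0)"
      using sum.inter_filter[of "{..J}" "\<lambda>a. if n = 2*a+k then f k a else 0" "\<lambda>a. a \<le> J-k"] by simp
    thus "(\<Sum>a\<le>J-k. if n = 2*a+k then f k a else 0) = (\<Sum>a\<le>J. if a \<le> J-k \<and> n = 2*a+k then f k a else 0)"
      by (simp add: if_distrib cong: if_cong) (intro sum.cong refl, auto)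
  qed
  also have "\<dots> = (\<Sum>a\<le>J. \<Sum>k\<le>J. if a \<le> J-k \<and> n = 2*a+k then f k a else 0)"
    by (rule sum.swap)
  also have "\<dots> = (\<Sum>a\<le>J. if a \<le> l \<and> l - a \<le> m then f (n - 2*a) a else 0)"
  proof (intro sum.cong refl)
    fix a assume a: "a \<in> {..J}"
    have "(\<Sum>k\<le>J. if a \<le> J-k \<and> n = 2*a+k then f k a else 0)
       = (\<Sum>k\<le>J. if k = n - 2*a then (if 2*a \<le> n \<and> a \<le> J - (n - 2*a) then f (n - 2*a) a else 0) else 0)"
      by (intro sum.cong refl) auto
    also have "\<dots> = (if n - 2*a \<le> J then (if 2*a \<le> n \<and> a \<le> J - (n - 2*a) then f (n - 2*a) a else 0) else 0)"
      by (simp add: sum.delta)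
    also have "\<dots> = (if a \<le> l \<and> l - a \<le> m then f (n - 2*a) a else 0)"
    proof -
      have "(n - 2*a \<le> J \<and> 2*a \<le> n \<and> a \<le> J - (n - 2*a)) = (a \<le> l \<and> l - a \<le> m)"
        using s unfolding J_def n_def by auto
      thus ?thesis by auto
    qed
    finally show "(\<Sum>k\<le>J. if a \<le> J-k \<and> n = 2*a+k then f k a else 0) = (if a \<le> l \<and> l - a \<le> m then f (n - 2*a) a else 0)" .
  qed
  also have "\<dots> = (\<Sum>a\<le>l. if l - a \<le> m then f (n - 2*a) a else 0)"
    by (subst sum_restrict_le[symmetric, of l J]) (auto simp: J_def intro!: sum.cong)
  finally have TT: "T J x n = (\<Sum>a\<le>l. if l - a \<le> m then f (n - 2*a) a else 0)" .
  have "T J x n / fact J = (\<Sum>a\<le>l. if l - a \<le> m then (2*x)^(n-2*a) / (fact (n-2*a) * fact a * fact (m+a-l)) else 0)"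
    unfolding TT sum_divide_distrib
  proof (intro sum.cong refl)
    fix a assume a: "a \<in> {..l}"
    show "(if l - a \<le> m then f (n - 2*a) a else 0) / fact J = (if l - a \<le> m then (2*x)^(n-2*a) / (fact (n-2*a) * fact a * fact (m+a-l)) else 0)"
    proof (cases "l - a \<le> m")
      case True
      have k1: "n - 2*a \<le> J" using True a unfolding J_def n_def by auto
      have k2: "a \<le> J - (n - 2*a)" using True a unfolding J_def n_def by auto
      have k3: "J - (n - 2*a) - a = m + a - l" using True a unfolding J_def n_def by auto
      have "f (n - 2*a) a = fact J / (fact (n - 2*a) * fact (J - (n - 2*a))) * (fact (J - (n - 2*a)) / (fact a * fact (m + a - l))) * (2*x)^(n - 2*a)"
        unfolding f_def binomial_fact[OF k1] binomial_fact[OF k2] k3 ..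
      also have "\<dots> = fact J * ((2*x)^(n - 2*a) / (fact (n - 2*a) * fact a * fact (m + a - l)))"
        by (simp add: field_simps)
      finally show ?thesis using True by simp
    qed simp
  qed
  thus ?thesis unfolding J_def n_def .
qed

lemma nonpos_shift:
  fixes \<rho> :: real
  assumes "\<rho> \<notin> \<int>\<^sub>\<le>\<^sub>0"
  shows "\<rho> + real k \<notin> \<int>\<^sub>\<le>\<^sub>0"
proof
  assume "\<rho> + real k \<in> \<int>\<^sub>\<le>\<^sub>0"
  then obtain j where "\<rho> + real k = - real j" by (auto elim!: nonpos_Ints_cases')
  hence "\<rho> = - real (j + k)" by simp
  hence "\<rho> \<in> \<int>\<^sub>\<le>\<^sub>0" by (metis minus_of_nat_in_nonpos_Ints)
  thus False using assms by simp
qed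

lemma nonpos_shift0:
  fixes \<rho> :: real
  assumes "\<rho> \<notin> \<int>\<^sub>\<le>\<^sub>0"
  shows "\<rho> + real k \<noteq> 0"
  using nonpos_shift[OF assms, of k] by auto

lemma final_comb:
  fixes \<rho> y :: real
  assumes r: "\<rho> \<notin> \<int>\<^sub>\<le>\<^sub>0" and s: "\<sigma> \<le> 1" and n: "n = 2*l+\<sigma>"
  shows "(\<Sum>m\<le>l. (-1)^(m+l) * pochhammer \<rho> (n+1) / (fact (l-m) * (\<rho> + real (l+m+\<sigma>)))
            * (\<Sum>a\<le>l. if l - a \<le> m then y^(n-2*a) / (fact (n-2*a) * fact a * fact (m+a-l)) else 0))
       = (\<Sum>a\<le>l. (-1)^a * pochhammer \<rho> (n-a) / (fact a * fact (n-2*a)) * y^(n-2*a))"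
proof -
  define P where "P = pochhammer \<rho> (n+1)"
  define G where "G = (\<lambda>a m. (-1)^(m+l) * P / (fact (l-m) * (\<rho> + real (l+m+\<sigma>))) * (y^(n-2*a) / (fact (n-2*a) * fact a * fact (m+a-l))))"
  have "(\<Sum>m\<le>l. (-1)^(m+l) * P / (fact (l-m) * (\<rho> + real (l+m+\<sigma>)))
            * (\<Sum>a\<le>l. if l - a \<le> m then y^(n-2*a) / (fact (n-2*a) * fact a * fact (m+a-l)) else 0))
      = (\<Sum>m\<le>l. \<Sum>a\<le>l. if l - a \<le> m then G a m else 0)"
    unfolding sum_distrib_left G_def by (intro sum.cong refl) auto
  also have "\<dots> = (\<Sum>a\<le>l. \<Sum>m\<le>l. if l - a \<le> m then G a m else 0)" by (rule sum.swap)
  also have "\<dots> = (\<Sum>a\<le>l. (-1)^a * pochhammer \<rho> (n-a) / (fact a * fact (n-2*a)) * y^(n-2*a))"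
  proof (rule sum.cong[OF refl])
    fix a assume a: "a \<in> {..l}"
    hence al: "a \<le> l" by simp
    define B where "B = \<rho> + real (n - a)"
    have Br: "\<And>r::nat. B + real r \<noteq> 0" unfolding B_def using nonpos_shift0[OF r] by (metis add.assoc of_nat_add)
    define C where "C = (-1)^a * P * y^(n-2*a) / (fact (n-2*a) * fact a)"
    have "(\<Sum>m\<le>l. if l - a \<le> m then G a m else 0) = (\<Sum>m\<in>{l-a..l}. G a m)"
    proof -
      have "{m \<in> {..l}. l - a \<le> m} = {l-a..l}" by auto
      thus ?thesis using sum.inter_filter[of "{..l}" "G a" "\<lambda>m. l - a \<le> m"] by simp
    qed
    also have "\<dots> = (\<Sum>r\<in>{0..a}. G a (r + (l - a)))"
      using sum.shift_bounds_cl_nat_ivl[of "G a" 0 "l - a" a] al by simp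
    also have "\<dots> = (\<Sum>r\<le>a. C * ((-1)^r / ((B + real r) * fact (a - r) * fact r)))"
    proof (rule sum.cong)
      show "{0..a} = {..a}" by auto
    next
      fix r assume "r \<in> {..a}"
      hence ra: "r \<le> a" by simp
      have e1: "l - (r + (l - a)) = a - r" using ra al by simp
      have e2: "r + (l - a) + a - l = r" using ra al by simp
      have e3: "real (l + (r + (l - a)) + \<sigma>) = B + real r - \<rho>" unfolding B_def n using ra al by simp
      have e4: "(-1::real)^(r + (l - a) + l) = (-1)^a * (-1)^r"
      proof -
        have eq: "r + (l - a) + l = 2*(l-a) + (a + r)" using al by simp
        have "(-1::real)^(2*(l-a) + (a + r)) = (-1)^a * (-1)^r"
          by (simp only: power_add power_mult) simp
        thus ?thesis by (simp only: eq)
      qed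
      show "G a (r + (l - a)) = C * ((-1)^r / ((B + real r) * fact (a - r) * fact r))"
        unfolding G_def C_def e1 e2 e3 e4 by (simp add: field_simps)
    qed
    also have "\<dots> = C * (1 / pochhammer B (Suc a))"
      by (simp only: sum_distrib_left[symmetric] S_lemma[OF Br])
    also have "\<dots> = (-1)^a * pochhammer \<rho> (n-a) / (fact a * fact (n-2*a)) * y^(n-2*a)"
    proof -
      have "P = pochhammer \<rho> (n - a) * pochhammer B (Suc a)"
        unfolding P_def B_def using pochhammer_product'[of \<rho> "n-a" "Suc a"] al n by simp
      moreover have "pochhammer B (Suc a) \<noteq> 0"
        using Br by (auto simp: pochhammer_eq_0_iff eq_neg_iff_add_eq_0)
      ultimately show ?thesis unfolding C_def by (simp add: field_simps)
    qed
    finally show "(\<Sum>m\<le>l. if l - a \<le> m then G a m else 0) = (-1)^a * pochhammer \<rho> (n-a) / (fact a * fact (n-2*a)) * y^(n-2*a)" .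
  qed
  finally show ?thesis unfolding P_def .
qed

lemma sphere_area_eq:
  assumes "D > 0"
  shows "sphere_area D = real D * unit_ball_vol (real D)"
proof -
  have nz: "real D / 2 \<notin> \<int>\<^sub>\<le>\<^sub>0" using assms by (auto dest!: nonpos_Ints_nonpos)
  have G0: "Gamma (real D / 2) \<noteq> 0" using nz by (simp add: Gamma_eq_zero_iff)
  have eq: "Gamma (real D / 2 + 1) = real D / 2 * Gamma (real D / 2)" using nz by (rule Gamma_plus1)
  have "real D * unit_ball_vol (real D) = real D * (pi powr (real D / 2) / (real D / 2 * Gamma (real D / 2)))"
    unfolding unit_ball_vol_def eq ..
  also have "\<dots> = 2 * pi powr (real D / 2) / Gamma (real D / 2)" using assms G0 by (simp add: field_simps)
  finally show ?thesis by (simp add: sphere_area_def)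
qed

lemma integral_term:
  fixes \<zeta>1 \<zeta>2 :: "'a::euclidean_space"
  assumes u: "norm \<zeta>1 = 1" "norm \<zeta>2 = 1"
  shows "integral\<^sup>L sphere_surface_measure
            (\<lambda>\<zeta>. (2 * (\<zeta>1 \<bullet> \<zeta>)) ^ (2*l + \<sigma>) / fact (2*l + \<sigma>)
                 * ((2 * (\<zeta>2 \<bullet> \<zeta>)) ^ (2*m + \<sigma>) / fact (2*m + \<sigma>))) / sphere_area DIM('a)
     = T (l+m+\<sigma>) (\<zeta>1 \<bullet> \<zeta>2) (2*l+\<sigma>) / (fact (l+m+\<sigma>) * pochhammer (real DIM('a) / 2) (l+m+\<sigma>))"
proof -
  define n where "n = 2*l+\<sigma>"
  define q where "q = 2*m+\<sigma>"
  define J where "J = l+m+\<sigma>"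
  have nq: "n + q = 2*J" "n \<le> 2*J" "2*J - n = q" unfolding n_def q_def J_def by auto
  define D where "D = real DIM('a)"
  define V where "V = unit_ball_vol D"
  define A where "A = avg (\<lambda>\<zeta>. (\<zeta>1 \<bullet> \<zeta>)^n * (\<zeta>2 \<bullet> \<zeta>)^q)"
  define PD where "PD = pochhammer (D / 2) J"
  define Ph where "Ph = pochhammer (1/2::real) J"
  have Dpos: "D > 0" unfolding D_def by simp
  have Vpos: "V > 0" unfolding V_def using Dpos by simp
  have PDpos: "PD > 0" unfolding PD_def using Dpos by (intro pochhammer_pos) simp
  have Phpos: "Ph > 0" unfolding Ph_def by (intro pochhammer_pos) simp
  have I1: "integral\<^sup>L sphere_surface_measure
            (\<lambda>\<zeta>. (2 * (\<zeta>1 \<bullet> \<zeta>)) ^ n / fact n * ((2 * (\<zeta>2 \<bullet> \<zeta>)) ^ q / fact q)) = D * (4^J / (fact n * fact q) * A)"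
  proof -
    have e1: "integral\<^sup>L sphere_surface_measure
            (\<lambda>\<zeta>. (2 * (\<zeta>1 \<bullet> \<zeta>)) ^ n / fact n * ((2 * (\<zeta>2 \<bullet> \<zeta>)) ^ q / fact q))
        = D * avg (\<lambda>\<zeta>. (2 * (\<zeta>1 \<bullet> \<zeta>)) ^ n / fact n * ((2 * (\<zeta>2 \<bullet> \<zeta>)) ^ q / fact q))"
      unfolding D_def by (rule sphere_integral_avg) (intro borel_measurable_continuous_onI continuous_intros, auto)
    have c: "(2::real)^n * 2^q = 4^J" using nq(1) by (simp add: power_add[symmetric] power_mult)
    have ef: "(\<lambda>\<zeta>. (2 * (\<zeta>1 \<bullet> \<zeta>)) ^ n / fact n * ((2 * (\<zeta>2 \<bullet> \<zeta>)) ^ q / fact q))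
        = (\<lambda>\<zeta>. (2^n * 2^q / (fact n * fact q)) * ((\<zeta>1 \<bullet> \<zeta>)^n * (\<zeta>2 \<bullet> \<zeta>)^q))"
      by (rule ext) (simp add: power_mult_distrib)
    have e2: "avg (\<lambda>\<zeta>. (2 * (\<zeta>1 \<bullet> \<zeta>)) ^ n / fact n * ((2 * (\<zeta>2 \<bullet> \<zeta>)) ^ q / fact q))
        = 4^J / (fact n * fact q) * A"
      unfolding ef avg_cmult A_def c ..
    show ?thesis by (simp only: e1 e2)
  qed
  have I2: "real ((2*J) choose n) * A = T J (\<zeta>1 \<bullet> \<zeta>2) n * cc J TYPE('a)"
    unfolding A_def using coeff_moment[OF u nq(2)] nq(3) by simp
  have I3: "real ((2*J) choose n) = fact (2*J) / (fact n * fact q)"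
    using binomial_fact[OF nq(2)] nq(3) by simp
  have I4: "cc J TYPE('a) = V * Ph / PD"
    using cc_closed[of J, where 'a='a] PDpos unfolding V_def Ph_def PD_def D_def by (simp add: field_simps)
  have I5: "fact (2*J) = 4^J * fact J * Ph" unfolding Ph_def by (rule pochhammer_half[symmetric])
  have I6: "sphere_area DIM('a) = D * V" unfolding D_def V_def by (rule sphere_area_eq) simp
  have AA: "A = T J (\<zeta>1 \<bullet> \<zeta>2) n * (V * Ph / PD) * (fact n * fact q) / fact (2*J)"
  proof -
    have f0: "fact (2*J) \<noteq> (0::real)" by simp
    have "A * fact (2*J) = T J (\<zeta>1 \<bullet> \<zeta>2) n * (V * Ph / PD) * (fact n * fact q)"
      using I2 unfolding I3 I4 by (simp add: field_simps)
    thus ?thesis using f0 PDpos by (simp add: field_simps)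
  qed
  have "D * (4^J / (fact n * fact q) * A) / (D * V) = T J (\<zeta>1 \<bullet> \<zeta>2) n / (fact J * PD)"
    unfolding AA I5 using Dpos Vpos PDpos Phpos by (simp add: field_simps)
  hence "integral\<^sup>L sphere_surface_measure
            (\<lambda>\<zeta>. (2 * (\<zeta>1 \<bullet> \<zeta>)) ^ n / fact n * ((2 * (\<zeta>2 \<bullet> \<zeta>)) ^ q / fact q)) / sphere_area DIM('a)
     = T J (\<zeta>1 \<bullet> \<zeta>2) n / (fact J * PD)"
    unfolding I1 I6 .
  thus ?thesis unfolding n_def q_def J_def PD_def D_def .
qed

lemma gamma_alg:
  fixes s P Gr G2 PM GM f y T fJ :: real
  assumes "Gr \<noteq> 0" "G2 \<noteq> 0" "PM \<noteq> 0" "GM \<noteq> 0" "f \<noteq> 0" "y \<noteq> 0" "fJ \<noteq> 0"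
  shows "s * (P * Gr) * G2 * (PM * GM) / (f * Gr * (y * G2) * GM) * (T / (fJ * PM)) = s * P / (f * y) * (T / fJ)"
  using assms by (simp add: field_simps)

theorem lemma1:
  fixes \<zeta>1 \<zeta>2 :: "real ^ 'n" and M l \<sigma> :: nat and \<rho> :: real
  assumes "CARD('n) = M" and "M \<ge> 3"
    and "norm \<zeta>1 = 1" and "norm \<zeta>2 = 1"
    and "\<sigma> \<in> {0, 1}"
    and "\<rho> \<notin> \<int>\<^sub>\<le>\<^sub>0"
  shows "gegenbauer (2*l + \<sigma>) \<rho> (\<zeta>1 \<bullet> \<zeta>2) =
    (\<Sum>m\<le>l. (-1)^(m + l) * Gamma (\<rho> + real (2*l + \<sigma>) + 1) * Gamma (\<rho> + real (l + m + \<sigma>))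
                * Gamma (real M / 2 + real (l + m + \<sigma>))
              / (fact (l - m) * Gamma \<rho> * Gamma (\<rho> + real (l + m + \<sigma>) + 1) * Gamma (real M / 2))
       * (integral\<^sup>L sphere_surface_measure
            (\<lambda>\<zeta>. (2 * (\<zeta>1 \<bullet> \<zeta>)) ^ (2*l + \<sigma>) / fact (2*l + \<sigma>)
                 * ((2 * (\<zeta>2 \<bullet> \<zeta>)) ^ (2*m + \<sigma>) / fact (2*m + \<sigma>))) / sphere_area M))"
proof -
  have s: "\<sigma> \<le> 1" using assms(5) by auto
  define n where "n = 2*l+\<sigma>"
  define x where "x = \<zeta>1 \<bullet> \<zeta>2"
  have DIM: "DIM(real ^ 'n) = M" using assms(1) by simp
  have r: "\<rho> \<notin> \<int>\<^sub>\<le>\<^sub>0" by (rule assms(6))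
  have Mpos: "real M / 2 > 0" using assms(2) by simp
  have Mnz: "real M / 2 \<notin> \<int>\<^sub>\<le>\<^sub>0" using Mpos by (auto dest!: nonpos_Ints_nonpos)
  have GM: "Gamma (real M / 2) \<noteq> 0" using Mnz by (simp add: Gamma_eq_zero_iff)
  have Gr: "Gamma \<rho> \<noteq> 0" using r by (simp add: Gamma_eq_zero_iff)
  have trm: "(-1)^(m + l) * Gamma (\<rho> + real (2*l + \<sigma>) + 1) * Gamma (\<rho> + real (l + m + \<sigma>))
                * Gamma (real M / 2 + real (l + m + \<sigma>))
              / (fact (l - m) * Gamma \<rho> * Gamma (\<rho> + real (l + m + \<sigma>) + 1) * Gamma (real M / 2))
       * (integral\<^sup>L sphere_surface_measure
            (\<lambda>\<zeta>. (2 * (\<zeta>1 \<bullet> \<zeta>)) ^ (2*l + \<sigma>) / fact (2*l + \<sigma>)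
                 * ((2 * (\<zeta>2 \<bullet> \<zeta>)) ^ (2*m + \<sigma>) / fact (2*m + \<sigma>))) / sphere_area M)
     = (-1)^(m+l) * pochhammer \<rho> (n+1) / (fact (l-m) * (\<rho> + real (l+m+\<sigma>)))
            * (\<Sum>a\<le>l. if l - a \<le> m then (2*x)^(n-2*a) / (fact (n-2*a) * fact a * fact (m+a-l)) else 0)" for m
  proof -
    define J where "J = l+m+\<sigma>"
    define PM where "PM = pochhammer (real M / 2) J"
    have PMpos: "PM > 0" unfolding PM_def using Mpos by (intro pochhammer_pos) simp
    have IS: "integral\<^sup>L sphere_surface_measure
            (\<lambda>\<zeta>. (2 * (\<zeta>1 \<bullet> \<zeta>)) ^ (2*l + \<sigma>) / fact (2*l + \<sigma>)
                 * ((2 * (\<zeta>2 \<bullet> \<zeta>)) ^ (2*m + \<sigma>) / fact (2*m + \<sigma>))) / sphere_area M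
        = T J x n / (fact J * PM)"
      using integral_term[OF assms(3,4), of l \<sigma> m] unfolding DIM J_def x_def n_def PM_def .
    have TT: "T J x n / fact J = (\<Sum>a\<le>l. if l - a \<le> m then (2*x)^(n-2*a) / (fact (n-2*a) * fact a * fact (m+a-l)) else 0)"
      unfolding J_def n_def by (rule T_closed[OF s])
    have g1: "Gamma (\<rho> + real (2*l + \<sigma>) + 1) = pochhammer \<rho> (n+1) * Gamma \<rho>"
      using pochhammer_Gamma[OF r, of "n+1"] Gr unfolding n_def by (simp add: field_simps)
    have rJ: "\<rho> + real J \<notin> \<int>\<^sub>\<le>\<^sub>0" by (rule nonpos_shift[OF r])
    have g4: "Gamma (\<rho> + real (l + m + \<sigma>) + 1) = (\<rho> + real J) * Gamma (\<rho> + real J)"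
      unfolding J_def using Gamma_plus1[OF rJ[unfolded J_def]] .
    have g2: "Gamma (\<rho> + real J) \<noteq> 0" using rJ by (simp add: Gamma_eq_zero_iff)
    have rJ0: "\<rho> + real J \<noteq> 0" using nonpos_shift0[OF r] .
    have g3: "Gamma (real M / 2 + real (l + m + \<sigma>)) = PM * Gamma (real M / 2)"
      using pochhammer_Gamma[OF Mnz, of J] GM unfolding PM_def J_def by (simp add: field_simps)
    have prev: "(-1)^(m + l) * Gamma (\<rho> + real (2*l + \<sigma>) + 1) * Gamma (\<rho> + real (l + m + \<sigma>))
                * Gamma (real M / 2 + real (l + m + \<sigma>))
              / (fact (l - m) * Gamma \<rho> * Gamma (\<rho> + real (l + m + \<sigma>) + 1) * Gamma (real M / 2))
          * (T J x n / (fact J * PM))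
        = (-1)^(m+l) * pochhammer \<rho> (n+1) / (fact (l-m) * (\<rho> + real J)) * (T J x n / fact J)"
      unfolding g1 g3 g4 unfolding J_def[symmetric] using Gr g2 GM PMpos rJ0 by (intro gamma_alg) auto
    show ?thesis
      apply (subst IS[unfolded J_def])
      apply (subst prev[unfolded J_def])
      apply (subst TT[unfolded J_def])
      apply (rule refl)
      done
  qed
  have "(\<Sum>m\<le>l. (-1)^(m + l) * Gamma (\<rho> + real (2*l + \<sigma>) + 1) * Gamma (\<rho> + real (l + m + \<sigma>))
                * Gamma (real M / 2 + real (l + m + \<sigma>))
              / (fact (l - m) * Gamma \<rho> * Gamma (\<rho> + real (l + m + \<sigma>) + 1) * Gamma (real M / 2))
       * (integral\<^sup>L sphere_surface_measure
            (\<lambda>\<zeta>. (2 * (\<zeta>1 \<bullet> \<zeta>)) ^ (2*l + \<sigma>) / fact (2*l + \<sigma>)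
                 * ((2 * (\<zeta>2 \<bullet> \<zeta>)) ^ (2*m + \<sigma>) / fact (2*m + \<sigma>))) / sphere_area M))
     = (\<Sum>m\<le>l. (-1)^(m+l) * pochhammer \<rho> (n+1) / (fact (l-m) * (\<rho> + real (l+m+\<sigma>)))
            * (\<Sum>a\<le>l. if l - a \<le> m then (2*x)^(n-2*a) / (fact (n-2*a) * fact a * fact (m+a-l)) else 0))"
    by (rule sum.cong[OF refl]) (rule trm)
  also have "\<dots> = (\<Sum>a\<le>l. (-1)^a * pochhammer \<rho> (n-a) / (fact a * fact (n-2*a)) * (2*x)^(n-2*a))"
    by (rule final_comb[OF r s n_def])
  also have "\<dots> = gegenbauer n \<rho> x"
  proof -
    have "n div 2 = l" unfolding n_def using s by auto
    thus ?thesis unfolding gegenbauer_def by simp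
  qed
  finally show ?thesis unfolding n_def x_def by simp
qed

end
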